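(* Let $\mathrm{CNF}$, $\mathrm{cps}$ and the translations ($V^{\sim}$, $M^{\wr}$, $M^{-}$) and ($P^{+}$, $M^{\times}$, $V^{\times\times}$) be as in the context. Then $\mathrm{CNF}\cong\mathrm{cps}$, namely: (1) for all terms $M$ and values $V$ of $\mathrm{CNF}$, $(M^{-})^{+}=M$, $(M^{\wr})^{\times}=M$ and $(V^{\sim})^{\times\times}=V$; (2) for all terms $P$, commands $M$ and values $V$ of $\mathrm{cps}$, $(P^{+})^{-}=P$, $(M^{\times})^{\wr}=M$ and $(V^{\times\times})^{\sim}=V$; (3) if $M_1\to M_2$ in $\mathrm{CNF}$ then $M_1^{\wr}\to M_2^{\wr}$ in $\mathrm{cps}$ (hence $M_1^{-}\to M_2^{-}$ in $\mathrm{cps}$); (4) if $M_1\to M_2$ for commands in $\mathrm{cps}$ then $M_1^{\times}\to M_2^{\times}$ in $\mathrm{CNF}$; hence if $P_1\to P_2$ for terms in $\mathrm{cps}$ then $P_1^{+}\to P_2^{+}$ in $\mathrm{CNF}$.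
   Context: Terms are considered up to $\alpha$-conversion; $[V/x]$ is capture-avoiding substitution; $\to$ is one-step reduction (closure of the listed rule under all constructors). $\mathrm{CNF}$: terms $M::=V\mid V(W,x.M)$ ($x$ bound in $M$), values $V,W::=x\mid\lambda x.M$. Left substitution: $\langle V\backslash x\rangle P=[V/x]P$, $\langle V(W,y.N)\backslash x\rangle P=V(W,y.\langle N\backslash x\rangle P)$. Rule: $(\beta_v)$ $(\lambda y.M)(W,x.P)\to\langle [W/y]M\backslash x\rangle P$. $\mathrm{cps}$ (with a fixed distinguished covariable $k$): commands $M,N::=kV\mid VW(\lambda x.N)$; values $V,W::=x\mid\lambda x.P$; terms $P::=\lambda k.M$ (application associates to the left). The substitution $[\lambda x.N/k]M$ is defined homomorphically except for the clause $[\lambda x.N/k](kV)=[V/x]N$. Rule: $(\beta_v)$ $(\lambda y.\lambda k.M)W(\lambda x.N)\to[\lambda x.N/k][W/y]M$. Translation from $\mathrm{CNF}$ to $\mathrm{cps}$: $x^{\sim}=x$; $(\lambda x.M)^{\sim}=\lambda x.M^{-}$; $M^{-}=\lambda k.M^{\wr}$; $V^{\wr}=kV^{\sim}$; $(V(W,x.M))^{\wr}=V^{\sim}W^{\sim}(\lambda x.M^{\wr})$. Inverse: $x^{\times\times}=x$; $(\lambda x.P)^{\times\times}=\lambda x.P^{+}$; $(\lambda k.M)^{+}=M^{\times}$; $(kV)^{\times}=V^{\times\times}$; $(VW(\lambda x.M))^{\times}=V^{\times\times}(W^{\times\times},x.M^{\times})$. *)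

theory Defs
  imports Main
begin

text \<open>Terms up to alpha-conversion are represented with de Bruijn indices
(binders: \<lambda>x.M in values, and the x in V(W,x.M) / V W (\<lambda>x.N)).
The distinguished covariable k of cps is not a term variable; \<lambda>k.M is
the constructor KLam.\<close>

datatype cterm = CVal cval | CApp cval cval cterm
     and cval = CVar nat | CLam cterm

primrec lift_c :: "nat \<Rightarrow> cterm \<Rightarrow> cterm"
  and lift_cv :: "nat \<Rightarrow> cval \<Rightarrow> cval" where
  "lift_c k (CVal V) = CVal (lift_cv k V)"
| "lift_c k (CApp V W M) = CApp (lift_cv k V) (lift_cv k W) (lift_c (Suc k) M)"
| "lift_cv k (CVar i) = CVar (if i < k then i else Suc i)"
| "lift_cv k (CLam M) = CLam (lift_c (Suc k) M)"

primrec subst_c :: "cterm \<Rightarrow> nat \<Rightarrow> cval \<Rightarrow> cterm"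
  and subst_cv :: "cval \<Rightarrow> nat \<Rightarrow> cval \<Rightarrow> cval" where
  "subst_c (CVal V) k U = CVal (subst_cv V k U)"
| "subst_c (CApp V W M) k U =
     CApp (subst_cv V k U) (subst_cv W k U) (subst_c M (Suc k) (lift_cv 0 U))"
| "subst_cv (CVar i) k U = (if i < k then CVar i else if i = k then U else CVar (i - 1))"
| "subst_cv (CLam M) k U = CLam (subst_c M (Suc k) (lift_cv 0 U))"

text \<open>Left substitution \<langle>N\x\<rangle>P, where x is the bound index 0 of P.\<close>
primrec lsubst :: "cterm \<Rightarrow> cterm \<Rightarrow> cterm" where
  "lsubst (CVal V) P = subst_c P 0 V"
| "lsubst (CApp V W N) P = CApp V W (lsubst N (lift_c 1 P))"

inductive cstep :: "cterm \<Rightarrow> cterm \<Rightarrow> bool"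
  and cvstep :: "cval \<Rightarrow> cval \<Rightarrow> bool" where
  c_beta: "cstep (CApp (CLam M) W P) (lsubst (subst_c M 0 W) P)"
| c_val: "cvstep V V' \<Longrightarrow> cstep (CVal V) (CVal V')"
| c_app1: "cvstep V V' \<Longrightarrow> cstep (CApp V W M) (CApp V' W M)"
| c_app2: "cvstep W W' \<Longrightarrow> cstep (CApp V W M) (CApp V W' M)"
| c_app3: "cstep M M' \<Longrightarrow> cstep (CApp V W M) (CApp V W M')"
| c_lam: "cstep M M' \<Longrightarrow> cvstep (CLam M) (CLam M')"

datatype pcmd = KRet pval | PApp pval pval pcmd
     and pval = PVar nat | PLam pterm
     and pterm = KLam pcmd

primrec lift_pc :: "nat \<Rightarrow> pcmd \<Rightarrow> pcmd"
  and lift_pv :: "nat \<Rightarrow> pval \<Rightarrow> pval"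
  and lift_pt :: "nat \<Rightarrow> pterm \<Rightarrow> pterm" where
  "lift_pc k (KRet V) = KRet (lift_pv k V)"
| "lift_pc k (PApp V W M) = PApp (lift_pv k V) (lift_pv k W) (lift_pc (Suc k) M)"
| "lift_pv k (PVar i) = PVar (if i < k then i else Suc i)"
| "lift_pv k (PLam P) = PLam (lift_pt (Suc k) P)"
| "lift_pt k (KLam M) = KLam (lift_pc k M)"

primrec subst_pc :: "pcmd \<Rightarrow> nat \<Rightarrow> pval \<Rightarrow> pcmd"
  and subst_pv :: "pval \<Rightarrow> nat \<Rightarrow> pval \<Rightarrow> pval"
  and subst_pt :: "pterm \<Rightarrow> nat \<Rightarrow> pval \<Rightarrow> pterm" where
  "subst_pc (KRet V) k U = KRet (subst_pv V k U)"
| "subst_pc (PApp V W M) k U =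
     PApp (subst_pv V k U) (subst_pv W k U) (subst_pc M (Suc k) (lift_pv 0 U))"
| "subst_pv (PVar i) k U = (if i < k then PVar i else if i = k then U else PVar (i - 1))"
| "subst_pv (PLam P) k U = PLam (subst_pt P (Suc k) (lift_pv 0 U))"
| "subst_pt (KLam M) k U = KLam (subst_pc M k U)"

text \<open>ksubst N M = [\<lambda>x.N/k]M, x being the bound index 0 of N. It is homomorphic
on the command spine; values contain no free k (every k there is bound by an
inner \<lambda>k), so they are left untouched.\<close>
primrec ksubst :: "pcmd \<Rightarrow> pcmd \<Rightarrow> pcmd" where
  "ksubst N (KRet V) = subst_pc N 0 V"
| "ksubst N (PApp V W M) = PApp V W (ksubst (lift_pc 1 N) M)"

inductive pstep :: "pcmd \<Rightarrow> pcmd \<Rightarrow> bool"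
  and pvstep :: "pval \<Rightarrow> pval \<Rightarrow> bool"
  and ptstep :: "pterm \<Rightarrow> pterm \<Rightarrow> bool" where
  p_beta: "pstep (PApp (PLam (KLam M)) W N) (ksubst N (subst_pc M 0 W))"
| p_ret: "pvstep V V' \<Longrightarrow> pstep (KRet V) (KRet V')"
| p_app1: "pvstep V V' \<Longrightarrow> pstep (PApp V W M) (PApp V' W M)"
| p_app2: "pvstep W W' \<Longrightarrow> pstep (PApp V W M) (PApp V W' M)"
| p_app3: "pstep M M' \<Longrightarrow> pstep (PApp V W M) (PApp V W M')"
| p_lam: "ptstep P P' \<Longrightarrow> pvstep (PLam P) (PLam P')"
| p_klam: "pstep M M' \<Longrightarrow> ptstep (KLam M) (KLam M')"

primrec tr_wr :: "cterm \<Rightarrow> pcmd"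
  and tr_tilde :: "cval \<Rightarrow> pval" where
  "tr_wr (CVal V) = KRet (tr_tilde V)"
| "tr_wr (CApp V W M) = PApp (tr_tilde V) (tr_tilde W) (tr_wr M)"
| "tr_tilde (CVar x) = PVar x"
| "tr_tilde (CLam M) = PLam (KLam (tr_wr M))"

definition tr_minus :: "cterm \<Rightarrow> pterm" where
  "tr_minus M = KLam (tr_wr M)"

primrec tr_times :: "pcmd \<Rightarrow> cterm"
  and tr_tt :: "pval \<Rightarrow> cval"
  and tr_plus :: "pterm \<Rightarrow> cterm" where
  "tr_times (KRet V) = CVal (tr_tt V)"
| "tr_times (PApp V W M) = CApp (tr_tt V) (tr_tt W) (tr_times M)"
| "tr_tt (PVar x) = CVar x"
| "tr_tt (PLam P) = CLam (tr_plus P)"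
| "tr_plus (KLam M) = tr_times M"

end

theory Submission
  imports Defs
begin

lemma tr_lift:
  "tr_wr (lift_c k M) = lift_pc k (tr_wr M)"
  "tr_tilde (lift_cv k V) = lift_pv k (tr_tilde V)"
  by (induction M and V arbitrary: k and k) auto

lemma tr_subst:
  "tr_wr (subst_c M k U) = subst_pc (tr_wr M) k (tr_tilde U)"
  "tr_tilde (subst_cv V k U) = subst_pv (tr_tilde V) k (tr_tilde U)"
  by (induction M and V arbitrary: k U and k U) (auto simp: tr_lift)

lemma tr_lsubst: "tr_wr (lsubst N P) = ksubst (tr_wr P) (tr_wr N)"
  by (induction N arbitrary: P) (auto simp: tr_subst tr_lift)

lemma inv1:
  "tr_times (tr_wr M) = M"
  "tr_tt (tr_tilde V) = V"
  by (induction M and V) auto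

lemma inv2:
  "tr_wr (tr_times M) = M"
  "tr_tilde (tr_tt V) = V"
  "tr_minus (tr_plus P) = P"
  by (induction M and V and P) (auto simp: tr_minus_def)

lemma fwd:
  "cstep M1 M2 \<Longrightarrow> pstep (tr_wr M1) (tr_wr M2)"
  "cvstep V1 V2 \<Longrightarrow> pvstep (tr_tilde V1) (tr_tilde V2)"
proof (induction rule: cstep_cvstep.inducts)
  case (c_beta M W P)
  then show ?case using pstep_pvstep_ptstep.p_beta[of "tr_wr M" "tr_tilde W" "tr_wr P"]
    by (simp add: tr_lsubst tr_subst)
qed (auto intro: pstep_pvstep_ptstep.intros)

lemma times_subst: "tr_times (subst_pc M k U) = subst_c (tr_times M) k (tr_tt U)"
  by (metis inv1(1) inv2(1,2) tr_subst(1))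

lemma times_ksubst: "tr_times (ksubst N M) = lsubst (tr_times M) (tr_times N)"
  by (metis inv1(1) inv2(1) tr_lsubst)

lemma bwd:
  "pstep M1 M2 \<Longrightarrow> cstep (tr_times M1) (tr_times M2)"
  "pvstep V1 V2 \<Longrightarrow> cvstep (tr_tt V1) (tr_tt V2)"
  "ptstep P1 P2 \<Longrightarrow> cstep (tr_plus P1) (tr_plus P2)"
proof (induction rule: pstep_pvstep_ptstep.inducts)
  case (p_beta M W N)
  then show ?case using cstep_cvstep.c_beta[of "tr_times M" "tr_tt W" "tr_times N"]
    by (simp add: times_ksubst times_subst)
qed (auto intro: cstep_cvstep.intros)

theorem theorem5:
  shows "((\<forall>M. tr_plus (tr_minus M) = M) \<and> (\<forall>M. tr_times (tr_wr M) = M)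
           \<and> (\<forall>V. tr_tt (tr_tilde V) = V))
    \<and> ((\<forall>P. tr_minus (tr_plus P) = P) \<and> (\<forall>M. tr_wr (tr_times M) = M)
           \<and> (\<forall>V. tr_tilde (tr_tt V) = V))
    \<and> (\<forall>M1 M2. cstep M1 M2 \<longrightarrow>
           pstep (tr_wr M1) (tr_wr M2) \<and> ptstep (tr_minus M1) (tr_minus M2))
    \<and> ((\<forall>M1 M2. pstep M1 M2 \<longrightarrow> cstep (tr_times M1) (tr_times M2))
           \<and> (\<forall>P1 P2. ptstep P1 P2 \<longrightarrow> cstep (tr_plus P1) (tr_plus P2)))"
  using inv1 inv2 fwd bwd
  by (auto simp: tr_minus_def inv1 intro: pstep_pvstep_ptstep.p_klam)

end
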